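(* Let $K>1$, $d\ge1$, and $\alpha_1,\dots,\alpha_K>0$. For $k=1,\dots,K$ let $p_0^{(k)}=\mathcal{N}({\bm{0}},\alpha_k{\bm{I}}_d)$, and let $p_0=\mathrm{PoE}(p_0^{(1)},\dots,p_0^{(K)})$. For any initial distribution $q_0$, denote by $q_t$ the law at time $t$ of the solution of the forward VP SDE started from $q_0$. Then for each $t\in(0,T]$, $$p_t=\mathrm{PoE}(p_t^{(1)},\dots,p_t^{(K)})$$ if and only if $\alpha_1=\dots=\alpha_K$.
   Context: Product of Experts: for probability densities $p^{(1)},\dots,p^{(K)}$ on $\mathbb{R}^d$, $\mathrm{PoE}(p^{(1)},\dots,p^{(K)})({\mathbf{x}})=\sqrt[K]{p^{(1)}({\mathbf{x}})\cdots p^{(K)}({\mathbf{x}})}\,/\,Z_K$ with $Z_K=\int\sqrt[K]{p^{(1)}({\mathbf{z}})\cdots p^{(K)}({\mathbf{z}})}\,\mathrm{d}{\mathbf{z}}$ (the normalized geometric mean). Forward VP SDE: $\mathrm{d}{\mathbf{z}}_t=-\beta_t{\mathbf{z}}_t\,\mathrm{d}t+\sqrt{2\beta_t}\,\mathrm{d}{\mathbf{w}}_t$ on $[0,T]$, ${\mathbf{z}}_0\sim q_0$, with a positive variance schedule $\beta_t$ and standard Wiener process ${\mathbf{w}}_t$; its strong solution is ${\mathbf{z}}_t=\gamma_t{\mathbf{z}}_0+\eta_t$ with deterministic $\gamma_t\in(0,1)$ for $t>0$ and Gaussian $\eta_t$ independent of ${\mathbf{z}}_0$, such that if ${\mathbf{z}}_0\sim\mathcal{N}({\bm{0}},{\bm{\Sigma}})$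 then ${\mathbf{z}}_t\sim\mathcal{N}({\bm{0}},\gamma_t{\bm{\Sigma}}+(1-\gamma_t){\bm{I}})$. Here $p_t^{(k)}$ and $p_t$ are obtained by this diffusion from $p_0^{(k)}$ and $p_0$ respectively, and equality means equality of distributions. *)

theory Defs
  imports "HOL-Analysis.Analysis"
begin

definition iso_gauss :: "real \<Rightarrow> 'a::euclidean_space \<Rightarrow> real" where
  "iso_gauss s x = (2 * pi * s) powr (- real DIM('a) / 2) * exp (- (norm x)\<^sup>2 / (2 * s))"

definition poe :: "nat \<Rightarrow> (nat \<Rightarrow> 'a::euclidean_space \<Rightarrow> real) \<Rightarrow> 'a \<Rightarrow> real" where
  "poe K p x = (\<Prod>k<K. p k x) powr (1 / real K)
      / (\<integral>z. (\<Prod>k<K. p k z) powr (1 / real K) \<partial>lborel)"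

text \<open>Covariance factor of the VP SDE dz = -beta z dt + sqrt(2 beta) dw:
  z_t = exp(-B_t) z_0 + eta_t with B_t = int_0^t beta, so Cov(z_t) = gamma_t Sigma + (1-gamma_t) I
  with gamma_t = exp(-2 B_t).\<close>
definition vp_gamma :: "(real \<Rightarrow> real) \<Rightarrow> real \<Rightarrow> real" where
  "vp_gamma \<beta> t = exp (- 2 * integral {0..t} \<beta>)"

text \<open>Density at time t of the forward VP diffusion started from the density q:
  law of sqrt(gamma_t) z_0 + eta_t with eta_t ~ N(0,(1-gamma_t) I) independent of z_0.\<close>
definition vp_forward :: "(real \<Rightarrow> real) \<Rightarrow> real \<Rightarrow> ('a::euclidean_space \<Rightarrow> real) \<Rightarrow> 'a \<Rightarrow> real" where
  "vp_forward \<beta> t q x =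
     (\<integral>z. q z * iso_gauss (1 - vp_gamma \<beta> t) (x - sqrt (vp_gamma \<beta> t) *\<^sub>R z) \<partial>lborel)"

end

theory Submission
  imports Defs "HOL-Probability.Distributions"
begin

lemma gauss1:
  fixes l \<mu> :: real assumes l: "l > 0"
  shows "(\<integral>\<^sup>+x. ennreal (exp (- l * (x - \<mu>)\<^sup>2)) \<partial>lborel) = ennreal (sqrt (pi / l))"
proof -
  define \<sigma> where "\<sigma> = sqrt (1 / (2 * l))"
  have s2: "\<sigma>\<^sup>2 = 1 / (2*l)" using l by (simp add: \<sigma>_def)
  have eq: "exp (- l * (x - \<mu>)\<^sup>2) = sqrt (pi / l) * normal_density \<mu> \<sigma> x" for x
    using l by (simp add: normal_density_def s2 real_sqrt_divide field_simps)
  have "(\<integral>\<^sup>+x. ennreal (exp (- l * (x - \<mu>)\<^sup>2)) \<partial>lborel)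
      = (\<integral>\<^sup>+x. ennreal (sqrt (pi / l) * normal_density \<mu> \<sigma> x) \<partial>lborel)"
    by (simp only: eq)
  also have "\<dots> = ennreal (\<integral>x. sqrt (pi / l) * normal_density \<mu> \<sigma> x \<partial>lborel)"
    by (intro nn_integral_eq_integral integrable_mult_right integrable_normal_density AE_I2) (use l in \<open>auto simp: \<sigma>_def\<close>)
  also have "\<dots> = ennreal (sqrt (pi / l))"
    using integral_normal_density[of \<sigma> \<mu>] l by (simp add: \<sigma>_def)
  finally show ?thesis .
qed

lemma norm_sq_basis: "(norm (z::'a::euclidean_space))\<^sup>2 = (\<Sum>b\<in>Basis. (z \<bullet> b)\<^sup>2)"
  by (subst power2_norm_eq_inner) (simp add: euclidean_inner[of z z] power2_eq_square)

lemma gaussd: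
  fixes l :: real and m :: "'a::euclidean_space" assumes l: "l > 0"
  shows "has_bochner_integral lborel (\<lambda>z::'a. exp (- l * (norm (z - m))\<^sup>2)) ((pi / l) powr (real DIM('a) / 2))"
proof (rule has_bochner_integral_nn_integral)
  show "(\<lambda>z::'a. exp (- l * (norm (z - m))\<^sup>2)) \<in> borel_measurable lborel" by measurable
  show "AE x in lborel. 0 \<le> exp (- l * (norm (x - m))\<^sup>2)" by simp
  show "0 \<le> (pi / l) powr (real DIM('a) / 2)" by simp
  have e: "exp (- l * (norm (z - m))\<^sup>2) = (\<Prod>b\<in>Basis. exp (- l * (z \<bullet> b - m \<bullet> b)\<^sup>2))" for z
    by (simp add: norm_sq_basis inner_diff_left sum_distrib_left exp_sum flip: sum_negf)
  have "(\<integral>\<^sup>+z. ennreal (exp (- l * (norm (z - m))\<^sup>2)) \<partial>lborel)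
      = (\<integral>\<^sup>+z. (\<Prod>b\<in>Basis. ennreal (exp (- l * (z \<bullet> b - m \<bullet> b)\<^sup>2))) \<partial>lborel)"
    unfolding e by (simp add: prod_ennreal)
  also have "\<dots> = (\<Prod>b\<in>(Basis::'a set). (\<integral>\<^sup>+x. ennreal (exp (- l * (x - m \<bullet> b)\<^sup>2)) \<partial>lborel))"
    by (rule nn_integral_lborel_prod) auto
  also have "\<dots> = (\<Prod>b\<in>(Basis::'a set). ennreal (sqrt (pi / l)))"
    by (rule prod.cong[OF refl], rule gauss1[OF l])
  also have "\<dots> = ennreal (sqrt (pi / l) ^ DIM('a))"
    using l by (simp add: ennreal_power)
  also have "sqrt (pi / l) ^ DIM('a) = (pi / l) powr (real DIM('a) / 2)"
    using l by (simp add: sqrt_def root_powr_inverse powr_powr flip: powr_realpow)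
  finally show "(\<integral>\<^sup>+z. ennreal (exp (- l * (norm (z - m))\<^sup>2)) \<partial>lborel) = ennreal ((pi / l) powr (real DIM('a) / 2))" .
qed
lemma iso_gauss_int:
  assumes s: "s > 0"
  shows "has_bochner_integral lborel (iso_gauss s :: 'a::euclidean_space \<Rightarrow> real) 1"
proof -
  let ?e = "real DIM('a) / 2"
  have "has_bochner_integral lborel (\<lambda>z::'a. (2 * pi * s) powr (- ?e) * exp (- (1 / (2 * s)) * (norm (z - 0))\<^sup>2))
     ((2 * pi * s) powr (- ?e) * (pi / (1 / (2 * s))) powr ?e)"
    by (rule has_bochner_integral_mult_right, rule gaussd) (use s in simp)
  moreover have "(\<lambda>z::'a. (2 * pi * s) powr (- ?e) * exp (- (1 / (2 * s)) * (norm (z - 0))\<^sup>2)) = iso_gauss s"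
    by (auto simp: iso_gauss_def fun_eq_iff)
  moreover have "(2 * pi * s) powr (- ?e) * (pi / (1 / (2 * s))) powr ?e = 1"
    using s by (simp add: powr_minus field_simps)
  ultimately show ?thesis by simp
qed

lemma exponent_identity:
  fixes a b c P Q R :: real
  assumes a: "a > 0" and b: "b > 0"
  defines "L \<equiv> 1 / a + c\<^sup>2 / b"
  defines "\<mu> \<equiv> c / (b * L)"
  shows "- P / (2 * a) - (R - 2 * c * Q + c\<^sup>2 * P) / (2 * b)
       = - R / (2 * (c\<^sup>2 * a + b)) - (L / 2) * (P - 2 * \<mu> * Q + \<mu>\<^sup>2 * R)"
proof -
  define S where "S = c\<^sup>2 * a + b"
  have S: "S > 0" unfolding S_def using a b by (intro add_nonneg_pos) auto
  have L': "L = S / (a * b)" using a b by (simp add: L_def S_def field_simps)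
  have m': "\<mu> = c * a / S" using a b S by (simp add: \<mu>_def L' field_simps)
  have "- P / (2 * a) - (R - 2 * c * Q + c\<^sup>2 * P) / (2 * b) - (- R / (2 * S) - (L / 2) * (P - 2 * \<mu> * Q + \<mu>\<^sup>2 * R)) = 0"
    unfolding m' L' using a b S apply (simp add: field_simps power2_eq_square)
    using S_def by algebra
  then show ?thesis unfolding S_def by simp
qed

lemma conv_gauss:
  fixes a b c :: real and x :: "'a::euclidean_space"
  assumes a: "a > 0" and b: "b > 0"
  shows "(\<integral>z. iso_gauss a z * iso_gauss b (x - c *\<^sub>R z) \<partial>lborel) = iso_gauss (c\<^sup>2 * a + b) x"
proof -
  let ?e = "real DIM('a) / 2"
  define L where "L = 1 / a + c\<^sup>2 / b"
  define \<mu> where "\<mu> = c / (b * L)"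
  define S where "S = c\<^sup>2 * a + b"
  have L: "L > 0" unfolding L_def using a b by (intro add_pos_nonneg) auto
  have S: "S > 0" unfolding S_def using a b by (intro add_nonneg_pos) auto
  define K0 where "K0 = (2 * pi * a) powr (- ?e) * (2 * pi * b) powr (- ?e) * exp (- (norm x)\<^sup>2 / (2 * S))"
  have pw: "iso_gauss a z * iso_gauss b (x - c *\<^sub>R z) = K0 * exp (- (L / 2) * (norm (z - \<mu> *\<^sub>R x))\<^sup>2)" for z
  proof -
    have n1: "(norm (x - c *\<^sub>R z))\<^sup>2 = (norm x)\<^sup>2 - 2 * c * (x \<bullet> z) + c\<^sup>2 * (norm z)\<^sup>2"
      unfolding power2_norm_eq_inner by (simp add: power2_norm_eq_inner inner_diff_left inner_diff_right inner_commute power2_eq_square algebra_simps)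
    have n2: "(norm (z - \<mu> *\<^sub>R x))\<^sup>2 = (norm z)\<^sup>2 - 2 * \<mu> * (x \<bullet> z) + \<mu>\<^sup>2 * (norm x)\<^sup>2"
      unfolding power2_norm_eq_inner by (simp add: power2_norm_eq_inner inner_diff_left inner_diff_right inner_commute power2_eq_square algebra_simps)
    have ex: "- (norm z)\<^sup>2 / (2 * a) - (norm (x - c *\<^sub>R z))\<^sup>2 / (2 * b)
        = - (norm x)\<^sup>2 / (2 * S) - (L / 2) * (norm (z - \<mu> *\<^sub>R x))\<^sup>2"
      unfolding n1 n2 unfolding S_def \<mu>_def L_def by (rule exponent_identity[OF a b])
    have "iso_gauss a z * iso_gauss b (x - c *\<^sub>R z)
       = (2 * pi * a) powr (- ?e) * (2 * pi * b) powr (- ?e) * exp (- (norm z)\<^sup>2 / (2 * a) - (norm (x - c *\<^sub>R z))\<^sup>2 / (2 * b))"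
      by (simp add: iso_gauss_def exp_diff exp_minus field_simps)
    also have "\<dots> = K0 * exp (- (L / 2) * (norm (z - \<mu> *\<^sub>R x))\<^sup>2)"
      unfolding ex K0_def by (simp only: mult.assoc mult_exp_exp) (simp add: algebra_simps)
    finally show ?thesis .
  qed
  have hb: "has_bochner_integral lborel (\<lambda>z::'a. K0 * exp (- (L / 2) * (norm (z - \<mu> *\<^sub>R x))\<^sup>2))
     (K0 * (pi / (L / 2)) powr ?e)"
    by (rule has_bochner_integral_mult_right, rule gaussd) (use L in simp)
  have "(\<integral>z. iso_gauss a z * iso_gauss b (x - c *\<^sub>R z) \<partial>lborel) = K0 * (pi / (L / 2)) powr ?e"
    unfolding pw using hb by (simp add: has_bochner_integral_iff)
  also have "\<dots> = iso_gauss S x"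
  proof -
    have L': "pi / (L / 2) = (2 * pi * a) * (2 * pi * b) / (2 * pi * S)"
    proof -
      have LS: "L = S / (a * b)" using a b by (simp add: L_def S_def field_simps)
      show ?thesis unfolding LS using a b S by (simp add: field_simps)
    qed
    show ?thesis unfolding K0_def iso_gauss_def L' using a b S
      by (simp add: powr_minus powr_divide powr_mult field_simps)
  qed
  finally show ?thesis unfolding S_def .
qed
lemma iso_gauss_pos: "s > 0 \<Longrightarrow> iso_gauss s x > 0"
  by (simp add: iso_gauss_def)

lemma iso_gauss_meas[measurable]: "iso_gauss s \<in> borel_measurable borel"
  unfolding iso_gauss_def by measurable

lemma gm_gauss:
  fixes s :: "nat \<Rightarrow> real"
  assumes K: "K > 0" and s: "\<forall>k<K. s k > 0"
  defines "h \<equiv> real K / (\<Sum>k<K. 1 / s k)"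
  shows "h > 0 \<and> (\<exists>M>0. \<forall>x::'a::euclidean_space. (\<Prod>k<K. iso_gauss (s k) x) powr (1 / real K) = M * iso_gauss h x)"
proof -
  let ?e = "real DIM('a) / 2"
  have Sp: "(\<Sum>k<K. 1 / s k) > 0"
    using K s by (intro sum_pos) auto
  have h: "h > 0" unfolding h_def using K Sp by simp
  define A where "A = (\<Prod>k<K. (2 * pi * s k) powr (- ?e))"
  have A: "A > 0" unfolding A_def using s by (intro prod_pos) auto
  define M where "M = A powr (1 / real K) / (2 * pi * h) powr (- ?e)"
  have M: "M > 0" unfolding M_def using A h by (intro divide_pos_pos) auto
  have "(\<Prod>k<K. iso_gauss (s k) x) powr (1 / real K) = M * iso_gauss h x" for x :: 'a
  proof -
    have "(\<Prod>k<K. iso_gauss (s k) x) = A * exp (\<Sum>k<K. - (norm x)\<^sup>2 / (2 * s k))"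
      unfolding A_def iso_gauss_def by (simp add: exp_sum prod.distrib)
    also have "(\<Sum>k<K. - (norm x)\<^sup>2 / (2 * s k)) = - (norm x)\<^sup>2 / 2 * (\<Sum>k<K. 1 / s k)"
      by (simp add: sum_distrib_left)
    finally have "(\<Prod>k<K. iso_gauss (s k) x) powr (1 / real K)
        = A powr (1 / real K) * exp (- (norm x)\<^sup>2 / 2 * (\<Sum>k<K. 1 / s k) * (1 / real K))"
      using A by (simp add: powr_mult exp_powr_real)
    also have "- (norm x)\<^sup>2 / 2 * (\<Sum>k<K. 1 / s k) * (1 / real K) = - (norm x)\<^sup>2 / (2 * h)"
      unfolding h_def using K Sp by (simp add: field_simps)
    also have "A powr (1 / real K) * exp (- (norm x)\<^sup>2 / (2 * h)) = M * iso_gauss h x"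
      unfolding M_def iso_gauss_def using h by simp
    finally show ?thesis .
  qed
  then show ?thesis using h M by blast
qed

lemma poe_gauss:
  fixes s :: "nat \<Rightarrow> real" and p :: "nat \<Rightarrow> 'a::euclidean_space \<Rightarrow> real"
  assumes K: "K > 0" and s: "\<forall>k<K. s k > 0" and p: "\<forall>k<K. p k = iso_gauss (s k)"
  shows "poe K p = iso_gauss (real K / (\<Sum>k<K. 1 / s k))"
proof -
  define h where "h = real K / (\<Sum>k<K. 1 / s k)"
  obtain M where M: "M > 0" and eq: "\<And>x::'a. (\<Prod>k<K. iso_gauss (s k) x) powr (1 / real K) = M * iso_gauss h x"
    and h: "h > 0"
    using gm_gauss[OF K s, where 'a='a] unfolding h_def by blast
  have pp: "(\<Prod>k<K. p k x) = (\<Prod>k<K. iso_gauss (s k) x)" for x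
    using p by (intro prod.cong) auto
  have "(\<integral>z. M * iso_gauss h (z::'a) \<partial>lborel) = M"
    using has_bochner_integral_integral_eq[OF has_bochner_integral_mult_right[OF iso_gauss_int[OF h, where 'a='a], of M]]
    by simp
  then show ?thesis
    unfolding poe_def pp eq h_def[symmetric] using M by (auto simp: fun_eq_iff)
qed

lemma test_int:
  assumes s: "s > 0"
  shows "(\<integral>x. iso_gauss s x * exp (- (norm x)\<^sup>2) \<partial>(lborel :: 'a::euclidean_space measure))
       = 1 / (1 + 2 * s) powr (real DIM('a) / 2)"
proof -
  let ?e = "real DIM('a) / 2"
  have A: "has_bochner_integral lborel (\<lambda>z::'a. (2 * pi * s) powr (- ?e) * exp (- (1 / (2 * s) + 1) * (norm (z - 0))\<^sup>2))
     ((2 * pi * s) powr (- ?e) * (pi / (1 / (2 * s) + 1)) powr ?e)"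
    by (rule has_bochner_integral_mult_right, rule gaussd) (use s in \<open>simp add: add_pos_pos\<close>)
  have B: "(\<lambda>z::'a. (2 * pi * s) powr (- ?e) * exp (- (1 / (2 * s) + 1) * (norm (z - 0))\<^sup>2))
      = (\<lambda>x. iso_gauss s x * exp (- (norm x)\<^sup>2))"
    by (auto simp: iso_gauss_def fun_eq_iff mult_exp_exp algebra_simps diff_divide_distrib)
  have C: "(2 * pi * s) powr (- ?e) * (pi / (1 / (2 * s) + 1)) powr ?e = 1 / (1 + 2 * s) powr ?e"
  proof -
    have "pi / (1 / (2 * s) + 1) = (2 * pi * s) / (1 + 2 * s)" using s by (simp add: field_simps)
    then show ?thesis using s by (simp add: powr_minus powr_divide field_simps)
  qed
  have "has_bochner_integral lborel (\<lambda>x::'a. iso_gauss s x * exp (- (norm x)\<^sup>2)) (1 / (1 + 2 * s) powr ?e)"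
    using A unfolding B C .
  then show ?thesis by (rule has_bochner_integral_integral_eq)
qed

lemma density_gauss_inj:
  assumes s: "s > 0" and r: "r > 0"
    and eq: "density lborel (\<lambda>x. ennreal (iso_gauss s x)) = density lborel (\<lambda>x::'a::euclidean_space. ennreal (iso_gauss r x))"
  shows "s = r"
proof -
  let ?e = "real DIM('a) / 2"
  let ?f = "\<lambda>x::'a. exp (- (norm x)\<^sup>2)"
  have "integral\<^sup>L (density lborel (\<lambda>x. ennreal (iso_gauss s x))) ?f = (\<integral>x. iso_gauss s x * ?f x \<partial>lborel)"
    using s by (subst integral_density) (auto intro!: AE_I2 less_imp_le iso_gauss_pos)
  moreover have "integral\<^sup>L (density lborel (\<lambda>x. ennreal (iso_gauss r x))) ?f = (\<integral>x. iso_gauss r x * ?f x \<partial>lborel)"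
    using r by (subst integral_density) (auto intro!: AE_I2 less_imp_le iso_gauss_pos)
  ultimately have "1 / (1 + 2 * s) powr ?e = 1 / (1 + 2 * r) powr ?e"
    using eq test_int[OF s, where 'a='a] test_int[OF r, where 'a='a] by simp
  then have pe: "(1 + 2 * s) powr ?e = (1 + 2 * r) powr ?e" using s r by simp
  have e: "?e > 0" by simp
  show ?thesis
  proof (rule ccontr)
    assume "s \<noteq> r"
    then have "s < r \<or> r < s" by linarith
    then show False
      using powr_less_mono2[OF e, of "1 + 2 * s" "1 + 2 * r"] powr_less_mono2[OF e, of "1 + 2 * r" "1 + 2 * s"] s r pe
      by auto
  qed
qed
lemma amhm:
  fixes v :: "nat \<Rightarrow> real"
  assumes fin: "finite A" and pos: "\<forall>i\<in>A. v i > 0"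
    and eq: "(\<Sum>i\<in>A. v i) * (\<Sum>i\<in>A. 1 / v i) = (real (card A))\<^sup>2"
  shows "\<forall>i\<in>A. \<forall>j\<in>A. v i = v j"
proof -
  define D where "D i j = (v i - v j)\<^sup>2 / (v i * v j)" for i j
  have t: "D i j = v i * (1 / v j) + v j * (1 / v i) - 2" if "i \<in> A" "j \<in> A" for i j
  proof -
    have "v i > 0" "v j > 0" using pos that by auto
    then show ?thesis unfolding D_def by (simp add: field_simps power2_eq_square)
  qed
  have s1: "(\<Sum>i\<in>A. \<Sum>j\<in>A. v i * (1 / v j)) = (\<Sum>i\<in>A. v i) * (\<Sum>i\<in>A. 1 / v i)"
    by (simp add: sum_product)
  have s2: "(\<Sum>i\<in>A. \<Sum>j\<in>A. v j * (1 / v i)) = (\<Sum>i\<in>A. v i) * (\<Sum>i\<in>A. 1 / v i)"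
    by (subst sum.swap) (simp add: sum_product)
  have "(\<Sum>i\<in>A. \<Sum>j\<in>A. D i j) = (\<Sum>i\<in>A. \<Sum>j\<in>A. v i * (1 / v j) + v j * (1 / v i) - 2)"
    using t by (intro sum.cong refl) auto
  also have "\<dots> = (\<Sum>i\<in>A. \<Sum>j\<in>A. v i * (1 / v j)) + (\<Sum>i\<in>A. \<Sum>j\<in>A. v j * (1 / v i)) - 2 * (real (card A))\<^sup>2"
    by (simp add: sum.distrib sum_subtractf power2_eq_square)
  also have "\<dots> = 0" unfolding s1 s2 eq by simp
  finally have z: "(\<Sum>i\<in>A. \<Sum>j\<in>A. D i j) = 0" .
  have nn: "D i j \<ge> 0" if "i \<in> A" "j \<in> A" for i j
    using pos that unfolding D_def by (intro divide_nonneg_pos) auto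
  have "\<forall>i\<in>A. (\<Sum>j\<in>A. D i j) = 0"
    using z fin nn by (subst (asm) sum_nonneg_eq_0_iff) (auto intro: sum_nonneg)
  then have "\<forall>i\<in>A. \<forall>j\<in>A. D i j = 0"
    using fin nn by (auto simp: sum_nonneg_eq_0_iff)
  then show ?thesis
    using pos unfolding D_def by auto (metis less_irrefl)
qed

lemma key_alg:
  fixes \<alpha> :: "nat \<Rightarrow> real" and g :: real
  assumes K: "K > 0" and a: "\<forall>k<K. \<alpha> k > 0" and g0: "0 < g" and g1: "g < 1"
  shows "g * (real K / (\<Sum>k<K. 1 / \<alpha> k)) + (1 - g) = real K / (\<Sum>k<K. 1 / (g * \<alpha> k + (1 - g)))
     \<longleftrightarrow> (\<forall>j<K. \<forall>k<K. \<alpha> j = \<alpha> k)"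
proof
  assume all: "\<forall>j<K. \<forall>k<K. \<alpha> j = \<alpha> k"
  define c where "c = \<alpha> 0"
  have ac: "\<forall>k<K. \<alpha> k = c" using all K unfolding c_def by blast
  have c: "c > 0" using a K unfolding c_def by blast
  have "(\<Sum>k<K. 1 / \<alpha> k) = (\<Sum>k<K. 1 / c)" using ac by (intro sum.cong) auto
  then have "(\<Sum>k<K. 1 / \<alpha> k) = real K / c" by simp
  moreover have "(\<Sum>k<K. 1 / (g * \<alpha> k + (1 - g))) = real K / (g * c + (1 - g))"
  proof -
    have "(\<Sum>k<K. 1 / (g * \<alpha> k + (1 - g))) = (\<Sum>k<K. 1 / (g * c + (1 - g)))" using ac by (intro sum.cong) auto
    then show ?thesis by simp
  qed
  moreover have "g * c + (1 - g) > 0" using c g0 g1 by (intro add_pos_pos) auto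
  ultimately show "g * (real K / (\<Sum>k<K. 1 / \<alpha> k)) + (1 - g) = real K / (\<Sum>k<K. 1 / (g * \<alpha> k + (1 - g)))"
    using K c by simp
next
  assume H: "g * (real K / (\<Sum>k<K. 1 / \<alpha> k)) + (1 - g) = real K / (\<Sum>k<K. 1 / (g * \<alpha> k + (1 - g)))"
  define u where "u k = 1 / \<alpha> k" for k
  define v where "v k = g + (1 - g) * u k" for k
  have u: "\<forall>k<K. u k > 0" using a unfolding u_def by auto
  have v: "\<forall>k<K. v k > 0" using u g0 g1 unfolding v_def by (auto intro!: add_pos_nonneg)
  define Su where "Su = (\<Sum>k<K. u k)"
  define Sv where "Sv = (\<Sum>k<K. v k)"
  define W where "W = (\<Sum>k<K. 1 / v k)"
  have Su: "Su > 0" unfolding Su_def using u K by (intro sum_pos) auto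
  have Sv: "Sv = g * real K + (1 - g) * Su"
    unfolding Sv_def Su_def v_def by (simp add: sum.distrib sum_distrib_left)
  have tm: "1 / (g * \<alpha> k + (1 - g)) = (1 - g / v k) / (1 - g)" if "k < K" for k
  proof -
    have ak: "\<alpha> k > 0" using a that by auto
    have d: "g * \<alpha> k + (1 - g) > 0" using ak g0 g1 by (intro add_pos_pos) auto
    have "v k = (g * \<alpha> k + (1 - g)) / \<alpha> k" unfolding v_def u_def using ak by (simp add: field_simps)
    then have "g / v k = g * \<alpha> k / (g * \<alpha> k + (1 - g))" using ak d by simp
    then have "1 - g / v k = (1 - g) / (g * \<alpha> k + (1 - g))" using d by (simp add: field_simps)
    then show ?thesis using g1 d by simp
  qed
  have R: "(\<Sum>k<K. 1 / (g * \<alpha> k + (1 - g))) = (real K - g * W) / (1 - g)"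
  proof -
    have "(\<Sum>k<K. 1 / (g * \<alpha> k + (1 - g))) = (\<Sum>k<K. (1 - g / v k) / (1 - g))"
      using tm by (intro sum.cong) auto
    also have "\<dots> = (real K - g * W) / (1 - g)"
      unfolding W_def by (simp add: sum_divide_distrib[symmetric] sum_subtractf sum_distrib_left)
    finally show ?thesis .
  qed
  have Rpos: "(\<Sum>k<K. 1 / (g * \<alpha> k + (1 - g))) > 0"
    using a g0 g1 K by (intro sum_pos) (auto intro!: add_pos_pos)
  then have KW: "real K - g * W > 0" using R g1 by (simp add: zero_less_divide_iff)
  have L: "g * (real K / (\<Sum>k<K. 1 / \<alpha> k)) + (1 - g) = Sv / Su"
    unfolding Sv u_def[symmetric] Su_def[symmetric] using Su by (simp add: field_simps)
  from H have "Sv / Su = real K * (1 - g) / (real K - g * W)"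
    unfolding L R using g1 by simp
  then have "Sv * (real K - g * W) = real K * (1 - g) * Su"
    using Su KW by (simp add: field_simps)
  then have "g * (Sv * W) = g * (real K)\<^sup>2"
    unfolding Sv by (simp add: algebra_simps power2_eq_square)
  then have "Sv * W = (real (card {..<K}))\<^sup>2" using g0 by simp
  then have "\<forall>i\<in>{..<K}. \<forall>j\<in>{..<K}. v i = v j"
    using v unfolding Sv_def W_def by (intro amhm) auto
  then have V: "\<And>i j. i < K \<Longrightarrow> j < K \<Longrightarrow> v i = v j" by blast
  show "\<forall>j<K. \<forall>k<K. \<alpha> j = \<alpha> k"
  proof (intro allI impI)
    fix i j assume ij: "i < K" "j < K"
    then have "g + (1 - g) * u i = g + (1 - g) * u j" using V unfolding v_def by blast
    then have "u i = u j" using g1 by simp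
    then show "\<alpha> i = \<alpha> j" unfolding u_def by simp
  qed
qed

lemma gamma_bounds:
  assumes "T > 0" and cont: "continuous_on {0..T} \<beta>" and pos: "\<forall>s\<in>{0..T}. \<beta> s > 0"
    and t: "t \<in> {0<..T}"
  shows "0 < vp_gamma \<beta> t \<and> vp_gamma \<beta> t < 1"
proof -
  have t0: "0 < t" and tT: "t \<le> T" using t by auto
  have sub: "{0..t} \<subseteq> {0..T}" using tT by auto
  have c: "continuous_on {0..t} \<beta>" using cont sub continuous_on_subset by blast
  obtain x0 where x0: "x0 \<in> {0..t}" and mn: "\<forall>y\<in>{0..t}. \<beta> x0 \<le> \<beta> y"
    using continuous_attains_inf[OF compact_Icc _ c] t0 by auto
  have m: "\<beta> x0 > 0" using pos x0 sub by auto
  have "integral {0..t} (\<lambda>_. \<beta> x0) \<le> integral {0..t} \<beta>"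
    by (rule integral_le) (use mn c in \<open>auto intro: integrable_continuous_interval\<close>)
  moreover have "integral {0..t} (\<lambda>_. \<beta> x0) = t * \<beta> x0" using t0 by simp
  ultimately have "integral {0..t} \<beta> > 0" using m t0 by (smt (verit) mult_pos_pos)
  then show ?thesis unfolding vp_gamma_def by simp
qed

theorem proposition4:
  fixes K :: nat and \<alpha> :: "nat \<Rightarrow> real" and \<beta> :: "real \<Rightarrow> real" and T t :: real
    and p0 :: "nat \<Rightarrow> 'a::euclidean_space \<Rightarrow> real"
  assumes "K > 1"
    and "\<forall>k<K. \<alpha> k > 0"
    and "p0 = (\<lambda>k. iso_gauss (\<alpha> k))"
    and "T > 0" and "continuous_on {0..T} \<beta>" and "\<forall>s\<in>{0..T}. \<beta> s > 0"
    and "t \<in> {0<..T}"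
  shows "density lborel (\<lambda>x. ennreal (vp_forward \<beta> t (poe K p0) x))
           = density lborel (\<lambda>x. ennreal (poe K (\<lambda>k. vp_forward \<beta> t (p0 k)) x))
         \<longleftrightarrow> (\<forall>j<K. \<forall>k<K. \<alpha> j = \<alpha> k)"
proof -
  note a = assms(2)
  have K: "K > 0" using assms(1) by simp
  define g where "g = vp_gamma \<beta> t"
  have g0: "0 < g" and g1: "g < 1" using gamma_bounds[OF assms(4-7)] unfolding g_def by auto
  have vpf: "vp_forward \<beta> t (iso_gauss s) = (iso_gauss (g * s + (1 - g)) :: 'a \<Rightarrow> real)" if s: "s > 0" for s
  proof
    fix x :: 'a
    have "vp_forward \<beta> t (iso_gauss s) x = (\<integral>z. iso_gauss s z * iso_gauss (1 - g) (x - sqrt g *\<^sub>R z) \<partial>lborel)"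
      unfolding vp_forward_def g_def ..
    also have "\<dots> = iso_gauss ((sqrt g)\<^sup>2 * s + (1 - g)) x"
      by (rule conv_gauss) (use s g1 in auto)
    also have "(sqrt g)\<^sup>2 = g" using g0 by simp
    finally show "vp_forward \<beta> t (iso_gauss s) x = iso_gauss (g * s + (1 - g)) x" .
  qed
  define H0 where "H0 = real K / (\<Sum>k<K. 1 / \<alpha> k)"
  define H1 where "H1 = real K / (\<Sum>k<K. 1 / (g * \<alpha> k + (1 - g)))"
  have sp: "\<forall>k<K. g * \<alpha> k + (1 - g) > 0" using a g0 g1 by (auto intro!: add_pos_pos)
  have H0: "H0 > 0" unfolding H0_def using K a by (intro divide_pos_pos sum_pos) auto
  have H1: "H1 > 0" unfolding H1_def using K sp by (intro divide_pos_pos sum_pos) auto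
  have A: "g * H0 + (1 - g) > 0" using H0 g0 g1 by (intro add_pos_pos) auto
  have P0: "poe K p0 = iso_gauss H0"
    unfolding H0_def by (rule poe_gauss[OF K a]) (use assms(3) in simp)
  have LHS: "vp_forward \<beta> t (poe K p0) = iso_gauss (g * H0 + (1 - g))"
    unfolding P0 by (rule vpf[OF H0])
  have RHS: "poe K (\<lambda>k. vp_forward \<beta> t (p0 k)) = iso_gauss H1"
    unfolding H1_def by (rule poe_gauss[OF K sp]) (use assms(3) a vpf in auto)
  have "density lborel (\<lambda>x. ennreal (iso_gauss (g * H0 + (1 - g)) x))
        = density lborel (\<lambda>x::'a. ennreal (iso_gauss H1 x)) \<longleftrightarrow> g * H0 + (1 - g) = H1"
    using density_gauss_inj[OF A H1] by auto
  also have "\<dots> \<longleftrightarrow> (\<forall>j<K. \<forall>k<K. \<alpha> j = \<alpha> k)"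
    unfolding H0_def H1_def by (rule key_alg[OF K a g0 g1])
  finally show ?thesis unfolding LHS RHS .
qed

end
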